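(* Let $\delta>0$, let $(x^\star,u^\star)$ satisfy $f(x^\star)+g(x^\star)u^\star=0$, $g^\star:=g(x^\star)$, $\mathcal{C}:=(g^\star)^\top Q$. Let $K_P,K_I\in\mathbb{R}^{m\times m}$ be symmetric positive definite, $K_D\in\mathbb{R}^{m\times m}$ symmetric positive semidefinite, and $\xi^\star:=-K_I^{-1}u^\star$. Consider the closed-loop discrete-time system, whose solutions are sequences $(x_k,\xi_k,u_k)_{k\in\mathbb{N}}$ satisfying for all $k$ $$x_{k+1}=x_k+\delta f(z_k)+\delta g(z_k)u_k,\quad \xi_{k+1}=\xi_k+\delta\tilde y_k,\quad u_k=-K_P\tilde y_k-\tfrac12K_I(\xi_{k+1}+\xi_k)-\tfrac1\delta K_D\mathcal{C}(x_{k+1}-x_k),$$ where $z_k:=\tfrac12(x_{k+1}+x_k)$, $\tilde y_k:=\mathcal{C}(z_k-x^\star)$. Then: (i) The equilibrium $(x^\star,\xi^\star)$ of the closed loop is globally stable: it is Lyapunov stable and every solution is bounded; more precisely, $V_k:=\frac1\delta\big[\tfrac12(x_k-x^\star)^\top Q(x_k-x^\star)+\tfrac12(\xi_k-\xi^\star)^\top K_I(\xi_k-\xi^\star)+\tfrac12(x_k-x^\star)^\top\mathcal{C}^\top K_D\mathcal{C}(x_k-x^\star)\big]$ satisfies $V_{k+1}-V_k=-(z_k-x^\star)^\top Q\big[R+g^\star K_P(g^\star)^\top\big]Q(z_k-x^\star)\le0$ along every solution. (ii) If moreover there exists $\alpha>0$ with $R+g^\star K_P(g^\star)^\top>\alpha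 I_n$, then every solution satisfies $\lim_{k\to\infty}z_k=x^\star$ (and hence $\lim_{k\to\infty}y_k=(g^\star)^\top Qx^\star$ where $y_k=(g^\star)^\top Qz_k$).
   Context: Power converter model: fix integers $n,m\ge1$, a symmetric positive definite $Q\in\mathbb{R}^{n\times n}$, skew-symmetric $J_0,\dots,J_m\in\mathbb{R}^{n\times n}$, symmetric positive semidefinite $R\in\mathbb{R}^{n\times n}$, matrices $G_0,\dots,G_m\in\mathbb{R}^{n\times n}$, and $E\in\mathbb{R}^n$. Define $f(x):=(J_0-R)Qx+G_0E$ and $g(x)\in\mathbb{R}^{n\times m}$ with $i$-th column $J_iQx+G_iE$. $I_n$ is the $n\times n$ identity; for symmetric matrices $A>B$ means $A-B$ is positive definite. *)

theory Defs
  imports "HOL-Analysis.Analysis"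
begin

definition sym_pos_def :: "real^'n^'n \<Rightarrow> bool" where
  "sym_pos_def A \<longleftrightarrow> transpose A = A \<and> (\<forall>v. v \<noteq> 0 \<longrightarrow> v \<bullet> (A *v v) > 0)"

definition sym_pos_semidef :: "real^'n^'n \<Rightarrow> bool" where
  "sym_pos_semidef A \<longleftrightarrow> transpose A = A \<and> (\<forall>v. v \<bullet> (A *v v) \<ge> 0)"

definition skew :: "real^'n^'n \<Rightarrow> bool" where
  "skew A \<longleftrightarrow> transpose A = - A"

definition pc_f :: "real^'n^'n \<Rightarrow> real^'n^'n \<Rightarrow> real^'n^'n \<Rightarrow> real^'n^'n \<Rightarrow> real^'n
    \<Rightarrow> real^'n \<Rightarrow> real^'n" where
  "pc_f Q J0 R G0 E x = ((J0 - R) ** Q) *v x + G0 *v E"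

definition pc_g :: "real^'n^'n \<Rightarrow> ('m \<Rightarrow> real^'n^'n) \<Rightarrow> ('m \<Rightarrow> real^'n^'n) \<Rightarrow> real^'n
    \<Rightarrow> real^'n \<Rightarrow> real^'m^'n" where
  "pc_g Q J G E x = (\<chi> r i. ((J i ** Q) *v x + G i *v E) $ r)"

end

theory Submission
  imports Defs
begin


lemma inner_mv_transpose: "(x::real^'n) \<bullet> ((A::real^'m^'n) *v y) = (transpose A *v x) \<bullet> y"
  by (metis dot_lmul_matrix transpose_matrix_vector)

lemma sym_inner: "transpose A = A \<Longrightarrow> (x::real^'n) \<bullet> ((A::real^'n^'n) *v y) = y \<bullet> (A *v x)"
  by (metis inner_mv_transpose inner_commute)

lemma skew_inner: "skew A \<Longrightarrow> (x::real^'n) \<bullet> ((A::real^'n^'n) *v x) = 0"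
proof -
  assume "skew A"
  then have "x \<bullet> (A *v x) = - (x \<bullet> (A *v x))"
  proof -
    have "(- A) *v x = - (A *v x)" by (simp add: vec_eq_iff matrix_vector_mult_def sum_negf)
    then show ?thesis
      by (metis inner_mv_transpose inner_commute skew_def \<open>skew A\<close> inner_minus_right)
  qed
  then show ?thesis by simp
qed

lemma quad_diff0:
  assumes s: "p \<bullet> ((M::real^'n^'n) *v q) = q \<bullet> (M *v p)"
  shows "p \<bullet> (M *v p) - q \<bullet> (M *v q) = 2 * ((p - q) \<bullet> (M *v ((1/2) *\<^sub>R (p + q))))"
  using s by (simp add: matrix_vector_mult_scaleR matrix_vector_right_distrib inner_diff_left inner_add_right algebra_simps)

lemma quad_diff:
  assumes "transpose M = M"
  shows "(a - c) \<bullet> ((M::real^'n^'n) *v (a - c)) - (b - c) \<bullet> (M *v (b - c))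
     = 2 * ((a - b) \<bullet> (M *v ((1/2) *\<^sub>R (a + b) - c)))"
proof -
  have s: "(a - c) \<bullet> (M *v (b - c)) = (b - c) \<bullet> (M *v (a - c))" using sym_inner[OF assms] .
  have e1: "a - b = (a - c) - (b - c)" by simp
  have e2: "(1/2) *\<^sub>R (a + b) - c = (1/2) *\<^sub>R ((a - c) + (b - c))" by (simp add: vec_eq_iff field_simps)
  show ?thesis unfolding e1 e2 by (rule quad_diff0[OF s])
qed

lemma pd_coercive:
  assumes "sym_pos_def (A::real^'n^'n)"
  shows "\<exists>c>0. \<forall>v. c * (norm v)^2 \<le> v \<bullet> (A *v v)"
proof -
  let ?S = "{v::real^'n. norm v = 1}"
  have Seq: "?S = sphere 0 1" by (auto simp: sphere_def)
  have cS: "compact ?S" unfolding Seq by (rule compact_sphere)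
  have "axis undefined 1 \<in> ?S" by (simp add: norm_axis_1)
  then have ne: "?S \<noteq> {}" by blast
  have ct: "continuous_on ?S (\<lambda>v. v \<bullet> (A *v v))"
    by (intro continuous_intros linear_continuous_on matrix_vector_mul_bounded_linear)
  obtain v0 where v0: "v0 \<in> ?S" "\<And>y. y \<in> ?S \<Longrightarrow> v0 \<bullet> (A *v v0) \<le> y \<bullet> (A *v y)"
    using continuous_attains_inf[OF cS ne ct] by blast
  have "v0 \<noteq> 0" using v0(1) by auto
  then have c0: "v0 \<bullet> (A *v v0) > 0" using assms unfolding sym_pos_def_def by blast
  have main: "(v0 \<bullet> (A *v v0)) * (norm v)^2 \<le> v \<bullet> (A *v v)" for v
  proof (cases "v = 0")
    case True then show ?thesis by simp
  next
    case False
    let ?u = "(1 / norm v) *\<^sub>R v"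
    have u: "?u \<in> ?S" using False by simp
    have e: "?u \<bullet> (A *v ?u) = (v \<bullet> (A *v v)) / (norm v)^2"
      by (simp add: matrix_vector_mult_scaleR power2_eq_square)
    have "v0 \<bullet> (A *v v0) \<le> (v \<bullet> (A *v v)) / (norm v)^2" using v0(2)[OF u] unfolding e .
    then show ?thesis using False by (simp add: pos_le_divide_eq)
  qed
  show ?thesis using c0 main by blast
qed

lemma psd_upper:
  "\<exists>K\<ge>0. \<forall>v. \<bar>v \<bullet> ((A::real^'n^'n) *v v)\<bar> \<le> K * (norm v)^2"
proof -
  obtain K where K: "K > 0" "\<And>x. norm (A *v x) \<le> norm x * K"
    using bounded_linear.pos_bounded[OF matrix_vector_mul_bounded_linear[of A]] by blast
  show ?thesis
  proof (intro exI[of _ K] conjI allI)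
    fix v :: "real^'n"
    have "\<bar>v \<bullet> (A *v v)\<bar> \<le> norm v * norm (A *v v)" by (rule Cauchy_Schwarz_ineq2)
    also have "\<dots> \<le> norm v * (norm v * K)" by (intro mult_left_mono K(2)) simp
    finally show "\<bar>v \<bullet> (A *v v)\<bar> \<le> K * (norm v)^2" by (simp add: power2_eq_square algebra_simps)
  qed (use K in auto)
qed

lemma pd_inv:
  assumes "sym_pos_def (A::real^'n^'n)"
  shows "A ** matrix_inv A = mat 1"
proof -
  have "\<forall>x. A *v x = 0 \<longrightarrow> x = 0" using assms unfolding sym_pos_def_def
    by (metis inner_zero_right less_irrefl)
  then have "\<exists>B. B ** A = mat 1" by (simp add: matrix_left_invertible_ker)
  then have "invertible A" by (simp add: invertible_left_inverse)
  then have "\<exists>A'. A ** A' = mat 1 \<and> A' ** A = mat 1" unfolding invertible_def .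
  then show ?thesis unfolding matrix_inv_def by (rule someI_ex[THEN conjunct1])
qed

lemma pc_f_shift: "pc_f Q J0 R G0 E z = pc_f Q J0 R G0 E xs + (J0 - R) *v (Q *v (z - xs))"
  unfolding pc_f_def by (simp add: matrix_vector_mul_assoc[symmetric] matrix_vector_mult_diff_distrib)

lemma pc_g_mult: "pc_g Q J G E z *v u = (\<Sum>i\<in>UNIV. u$i *\<^sub>R ((J i ** Q) *v z + G i *v E))"
  by (simp add: pc_g_def vec_eq_iff matrix_vector_mult_def sum_component mult.commute)

lemma pc_g_shift: "pc_g Q J G E z *v u = pc_g Q J G E xs *v u + (\<Sum>i\<in>UNIV. u$i *\<^sub>R (J i *v (Q *v (z - xs))))"
  unfolding pc_g_mult sum.distrib[symmetric]
proof (intro sum.cong refl)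
  fix i
  have h: "(J i ** Q) *v z = (J i ** Q) *v xs + J i *v (Q *v (z - xs))"
    by (simp add: matrix_vector_mul_assoc matrix_vector_mult_diff_distrib)
  show "u $ i *\<^sub>R ((J i ** Q) *v z + G i *v E) =
         u $ i *\<^sub>R ((J i ** Q) *v xs + G i *v E) + u $ i *\<^sub>R (J i *v (Q *v (z - xs)))"
    unfolding h by (simp only: scaleR_add_right add_ac)
qed


lemma arith3:
  fixes a0 a1 b0 b1 c0 c1 p q r \<delta> :: real
  assumes "a1 - a0 = 2 * p" "b1 - b0 = 2 * q" "c1 - c0 = 2 * r"
  shows "(1/\<delta>) * ((1/2) * a1 + (1/2) * b1 + (1/2) * c1) - (1/\<delta>) * ((1/2) * a0 + (1/2) * b0 + (1/2) * c0)
     = (1/\<delta>) * (p + q + r)"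
proof -
  have "a1 = a0 + 2 * p" "b1 = b0 + 2 * q" "c1 = c0 + 2 * r" using assms by linarith+
  then show ?thesis by (simp add: algebra_simps add_divide_distrib)
qed

definition VV :: "real \<Rightarrow> real^'n^'n \<Rightarrow> real^'m^'m \<Rightarrow> real^'m^'m \<Rightarrow> real^'n^'m \<Rightarrow> real^'n \<Rightarrow> real^'m
   \<Rightarrow> real^'n \<Rightarrow> real^'m \<Rightarrow> real" where
  "VV \<delta> Q KI KD C xs \<xi>s x \<xi> = (1/\<delta>) * ((1/2) * ((x - xs) \<bullet> (Q *v (x - xs)))
     + (1/2) * ((\<xi> - \<xi>s) \<bullet> (KI *v (\<xi> - \<xi>s)))
     + (1/2) * ((x - xs) \<bullet> ((transpose C ** KD ** C) *v (x - xs))))"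

lemma step:
  fixes Q R J0 G0 :: "real^('n::finite)^'n"
    and J G :: "('m::finite) \<Rightarrow> real^'n^'n"
    and KP KI KD :: "real^'m^'m"
  assumes Qs: "transpose Q = Q" and J0: "skew J0" and J: "\<And>i. skew (J i)"
    and KIs: "transpose KI = KI" and KDs: "transpose KD = KD" and delta: "\<delta> > 0"
    and eq: "pc_f Q J0 R G0 E xs + pc_g Q J G E xs *v us = 0"
    and KIinv: "KI *v \<xi>s = - us"
    and gs: "gs = pc_g Q J G E xs"
    and C: "C = transpose gs ** Q"
    and z: "z = (1/2) *\<^sub>R (x1 + x0)"
    and yt: "yt = C *v (z - xs)"
    and ex: "x1 = x0 + \<delta> *\<^sub>R pc_f Q J0 R G0 E z + \<delta> *\<^sub>R (pc_g Q J G E z *v u)"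
    and exi: "\<xi>1 = \<xi>0 + \<delta> *\<^sub>R yt"
    and eu: "u = - (KP *v yt) - (1/2) *\<^sub>R (KI *v (\<xi>1 + \<xi>0)) - (1/\<delta>) *\<^sub>R (KD *v (C *v (x1 - x0)))"
  shows "VV \<delta> Q KI KD C xs \<xi>s x1 \<xi>1 - VV \<delta> Q KI KD C xs \<xi>s x0 \<xi>0
     = - ((z - xs) \<bullet> ((Q ** (R + gs ** KP ** transpose gs) ** Q) *v (z - xs)))"
proof -
  define zt where "zt = z - xs"
  define w where "w = Q *v zt"
  define d where "d = x1 - x0"
  define m where "m = (1/2) *\<^sub>R (\<xi>1 + \<xi>0) - \<xi>s"
  define Mk where "Mk = transpose C ** KD ** C"
  have Mks: "transpose Mk = Mk" unfolding Mk_def by (simp add: matrix_transpose_mul KDs matrix_mul_assoc)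
  have ytw: "yt = transpose gs *v w" unfolding yt C w_def zt_def by (simp add: matrix_vector_mul_assoc)
  have q1: "(x1 - xs) \<bullet> (Q *v (x1 - xs)) - (x0 - xs) \<bullet> (Q *v (x0 - xs)) = 2 * (d \<bullet> w)"
    unfolding d_def w_def zt_def z by (rule quad_diff[OF Qs])
  have q2: "(\<xi>1 - \<xi>s) \<bullet> (KI *v (\<xi>1 - \<xi>s)) - (\<xi>0 - \<xi>s) \<bullet> (KI *v (\<xi>0 - \<xi>s)) = 2 * ((\<delta> *\<^sub>R yt) \<bullet> (KI *v m))"
    unfolding m_def using quad_diff[OF KIs, of \<xi>1 \<xi>s \<xi>0] exi by simp
  have q3: "(x1 - xs) \<bullet> (Mk *v (x1 - xs)) - (x0 - xs) \<bullet> (Mk *v (x0 - xs)) = 2 * (d \<bullet> (Mk *v zt))"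
    unfolding d_def zt_def z by (rule quad_diff[OF Mks])
  have dV: "VV \<delta> Q KI KD C xs \<xi>s x1 \<xi>1 - VV \<delta> Q KI KD C xs \<xi>s x0 \<xi>0
      = (1/\<delta>) * (d \<bullet> w + (\<delta> *\<^sub>R yt) \<bullet> (KI *v m) + d \<bullet> (Mk *v zt))"
    unfolding VV_def Mk_def[symmetric] by (rule arith3[OF q1 q2 q3])
  have fz: "pc_f Q J0 R G0 E z + pc_g Q J G E z *v u
      = (J0 - R) *v w + (\<Sum>i\<in>UNIV. u$i *\<^sub>R (J i *v w)) + gs *v (u - us)"
  proof -
    have "pc_f Q J0 R G0 E z + pc_g Q J G E z *v u
       = (pc_f Q J0 R G0 E xs + pc_g Q J G E xs *v us) + (J0 - R) *v w + (\<Sum>i\<in>UNIV. u$i *\<^sub>R (J i *v w))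
         + pc_g Q J G E xs *v (u - us)"
      unfolding pc_f_shift[of Q J0 R G0 E z xs] pc_g_shift[of Q J G E z u xs] w_def zt_def
      by (simp add: matrix_vector_mult_diff_distrib algebra_simps)
    then show ?thesis using eq gs by simp
  qed
  have sum0: "w \<bullet> (\<Sum>i\<in>UNIV. u$i *\<^sub>R (J i *v w)) = 0"
    by (simp add: inner_sum_right skew_inner[OF J])
  have J0w: "w \<bullet> ((J0 - R) *v w) = - (w \<bullet> (R *v w))"
    using skew_inner[OF J0, of w] by (simp add: matrix_vector_mult_diff_rdistrib inner_diff_right)
  have gw: "w \<bullet> (gs *v (u - us)) = yt \<bullet> (u - us)"
    unfolding ytw by (rule inner_mv_transpose)
  have dw: "d \<bullet> w = \<delta> * (- (w \<bullet> (R *v w)) + yt \<bullet> (u - us))"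
  proof -
    have "d = \<delta> *\<^sub>R (pc_f Q J0 R G0 E z + pc_g Q J G E z *v u)"
      unfolding d_def using ex by (simp add: scaleR_add_right)
    then have "d \<bullet> w = \<delta> * (w \<bullet> (pc_f Q J0 R G0 E z + pc_g Q J G E z *v u))"
      by (simp add: inner_commute)
    also have "\<dots> = \<delta> * (- (w \<bullet> (R *v w)) + yt \<bullet> (u - us))"
      unfolding fz using sum0 J0w gw by (simp add: inner_add_right)
    finally show ?thesis .
  qed
  have Cd: "d \<bullet> (Mk *v zt) = (C *v d) \<bullet> (KD *v yt)"
    unfolding Mk_def yt zt_def
    by (metis inner_mv_transpose matrix_vector_mul_assoc transpose_transpose)
  have uus: "u - us = - (KP *v yt) - KI *v m - (1/\<delta>) *\<^sub>R (KD *v (C *v d))"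
    unfolding eu m_def d_def using KIinv by (simp add: matrix_vector_mult_diff_distrib algebra_simps)
  have KDsym: "yt \<bullet> (KD *v (C *v d)) = (C *v d) \<bullet> (KD *v yt)" by (rule sym_inner[OF KDs])
  have yu: "yt \<bullet> (u - us) = - (yt \<bullet> (KP *v yt)) - yt \<bullet> (KI *v m) - (1/\<delta>) * ((C *v d) \<bullet> (KD *v yt))"
    unfolding uus using KDsym by (simp add: inner_diff_right)
  have lhs: "VV \<delta> Q KI KD C xs \<xi>s x1 \<xi>1 - VV \<delta> Q KI KD C xs \<xi>s x0 \<xi>0
      = - (w \<bullet> (R *v w)) - yt \<bullet> (KP *v yt)"
    unfolding dV dw Cd yu using delta by (simp add: field_simps)
  have rhs: "zt \<bullet> ((Q ** (R + gs ** KP ** transpose gs) ** Q) *v zt) = w \<bullet> (R *v w) + yt \<bullet> (KP *v yt)"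
  proof -
    have "zt \<bullet> ((Q ** (R + gs ** KP ** transpose gs) ** Q) *v zt) = w \<bullet> ((R + gs ** KP ** transpose gs) *v w)"
      unfolding w_def by (metis Qs inner_mv_transpose matrix_vector_mul_assoc)
    also have "\<dots> = w \<bullet> (R *v w) + w \<bullet> (gs *v (KP *v yt))"
      unfolding ytw by (simp add: matrix_vector_mult_add_rdistrib inner_add_right matrix_vector_mul_assoc[symmetric] del: transpose_matrix_vector)
    also have "w \<bullet> (gs *v (KP *v yt)) = yt \<bullet> (KP *v yt)"
      unfolding ytw by (rule inner_mv_transpose)
    finally show ?thesis .
  qed
  show ?thesis unfolding lhs zt_def[symmetric] rhs by simp
qed


lemma quadform_split:
  assumes Qs: "transpose Q = Q"
  shows "zt \<bullet> ((Q ** (M::real^'n^'n) ** Q) *v zt) = (Q *v zt) \<bullet> (M *v (Q *v zt))"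
  by (metis Qs inner_mv_transpose matrix_vector_mul_assoc)

lemma quad_M_split:
  "(w::real^'n) \<bullet> ((R + gs ** KP ** transpose gs) *v w) = w \<bullet> (R *v w) + (transpose gs *v w) \<bullet> (KP *v (transpose gs *v w))"
proof -
  have "w \<bullet> ((R + gs ** KP ** transpose gs) *v w) = w \<bullet> (R *v w) + w \<bullet> (gs *v (KP *v (transpose gs *v w)))"
    by (simp add: matrix_vector_mult_add_rdistrib inner_add_right matrix_vector_mul_assoc[symmetric] del: transpose_matrix_vector)
  then show ?thesis by (simp add: inner_mv_transpose[of w gs] del: transpose_matrix_vector)
qed

lemma pd_nonneg: "sym_pos_def A \<Longrightarrow> 0 \<le> v \<bullet> (A *v v)"
  unfolding sym_pos_def_def by (cases "v = 0") (auto intro: less_imp_le)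

lemma psd_nonneg: "sym_pos_semidef A \<Longrightarrow> 0 \<le> v \<bullet> (A *v v)"
  unfolding sym_pos_semidef_def by auto

lemma Mk_nonneg: "sym_pos_semidef KD \<Longrightarrow> 0 \<le> x \<bullet> ((transpose C ** KD ** C) *v x)"
  by (metis inner_mv_transpose matrix_vector_mul_assoc transpose_transpose psd_nonneg)

lemma VV_bounds:
  assumes Q: "sym_pos_def Q" and KI: "sym_pos_def KI" and KD: "sym_pos_semidef KD" and delta: "\<delta> > 0"
  shows "\<exists>cL>0. \<exists>KU\<ge>0. \<forall>x \<xi>. cL * ((norm (x - xs))^2 + (norm (\<xi> - \<xi>s))^2) \<le> VV \<delta> Q KI KD C xs \<xi>s x \<xi>
        \<and> VV \<delta> Q KI KD C xs \<xi>s x \<xi> \<le> KU * ((norm (x - xs))^2 + (norm (\<xi> - \<xi>s))^2)"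
proof -
  obtain c1 where c1: "c1 > 0" "\<And>v. c1 * (norm v)^2 \<le> v \<bullet> (Q *v v)" using pd_coercive[OF Q] by blast
  obtain c2 where c2: "c2 > 0" "\<And>v. c2 * (norm v)^2 \<le> v \<bullet> (KI *v v)" using pd_coercive[OF KI] by blast
  obtain k1 where k1: "k1 \<ge> 0" "\<And>v. \<bar>v \<bullet> (Q *v v)\<bar> \<le> k1 * (norm v)^2" using psd_upper by blast
  obtain k2 where k2: "k2 \<ge> 0" "\<And>v. \<bar>v \<bullet> (KI *v v)\<bar> \<le> k2 * (norm v)^2" using psd_upper by blast
  obtain k3 where k3: "k3 \<ge> 0" "\<And>v. \<bar>v \<bullet> ((transpose C ** KD ** C) *v v)\<bar> \<le> k3 * (norm v)^2" using psd_upper by blast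
  define cL where "cL = min c1 c2 / (2 * \<delta>)"
  define KU where "KU = (k1 + k2 + k3) / (2 * \<delta>)"
  have cL0: "cL > 0" unfolding cL_def using c1 c2 delta by simp
  have KU0: "KU \<ge> 0" unfolding KU_def using k1 k2 k3 delta by simp
  have "\<forall>x \<xi>. cL * ((norm (x - xs))^2 + (norm (\<xi> - \<xi>s))^2) \<le> VV \<delta> Q KI KD C xs \<xi>s x \<xi>
        \<and> VV \<delta> Q KI KD C xs \<xi>s x \<xi> \<le> KU * ((norm (x - xs))^2 + (norm (\<xi> - \<xi>s))^2)"
  proof (intro allI conjI)
    fix x \<xi>
    let ?a = "(x - xs) \<bullet> (Q *v (x - xs))" and ?b = "(\<xi> - \<xi>s) \<bullet> (KI *v (\<xi> - \<xi>s))"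
      and ?c = "(x - xs) \<bullet> ((transpose C ** KD ** C) *v (x - xs))"
      and ?p = "(norm (x - xs))^2" and ?q = "(norm (\<xi> - \<xi>s))^2"
    have ha: "c1 * ?p \<le> ?a" "?a \<le> k1 * ?p" using c1(2) k1(2)[of "x - xs"] by auto
    have hb: "c2 * ?q \<le> ?b" "?b \<le> k2 * ?q" using c2(2) k2(2)[of "\<xi> - \<xi>s"] by auto
    have hc: "0 \<le> ?c" "?c \<le> k3 * ?p" using Mk_nonneg[OF KD] k3(2)[of "x - xs"] by auto
    have V: "VV \<delta> Q KI KD C xs \<xi>s x \<xi> = (?a + ?b + ?c) / (2 * \<delta>)" unfolding VV_def by (simp add: field_simps)
    have pq: "0 \<le> ?p" "0 \<le> ?q" by auto
    have "min c1 c2 * (?p + ?q) \<le> c1 * ?p + c2 * ?q"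
      using pq by (simp add: distrib_left add_mono mult_right_mono)
    also have "\<dots> \<le> ?a + ?b + ?c" using ha hb hc by linarith
    finally have lo: "min c1 c2 * (?p + ?q) \<le> ?a + ?b + ?c" .
    have "?a + ?b + ?c \<le> k1 * ?p + k2 * ?q + k3 * ?p" using ha hb hc by linarith
    also have "\<dots> \<le> (k1 + k2 + k3) * (?p + ?q)" using pq k1 k2 k3 by (simp add: algebra_simps)
    finally have hi: "?a + ?b + ?c \<le> (k1 + k2 + k3) * (?p + ?q)" .
    show "cL * (?p + ?q) \<le> VV \<delta> Q KI KD C xs \<xi>s x \<xi>"
      unfolding V cL_def using lo delta by (simp add: divide_right_mono)
    show "VV \<delta> Q KI KD C xs \<xi>s x \<xi> \<le> KU * (?p + ?q)"
      unfolding V KU_def using hi delta by (simp add: divide_right_mono)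
  qed
  then show ?thesis using cL0 KU0 by blast
qed


lemma half_double: "(1/2) *\<^sub>R ((a::real^'n) + a) = a"
  by (simp add: vec_eq_iff)

lemma mv_neg: "(A::real^'n^'m) *v (- v) = - (A *v v)"
  by (simp add: vec_eq_iff matrix_vector_mult_def sum_negf)

lemma mv_scaled_id: "(\<alpha> *\<^sub>R mat 1) *v (w::real^'n) = \<alpha> *\<^sub>R w"
  by (metis scaleR_matrix_vector_assoc matrix_vector_mul_lid)

lemma dist_pair_sq: "dist (a, b) (c, d) = sqrt ((norm (a - c))^2 + (norm (b - d))^2)"
  unfolding dist_Pair_Pair by (simp add: dist_norm)

theorem proposition4:
  fixes Q R J0 G0 :: "real^('n::finite)^'n"
    and J G :: "('m::finite) \<Rightarrow> real^'n^'n"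
    and E :: "real^'n"
    and \<delta> :: real
    and xs :: "real^'n" and us :: "real^'m"
    and KP KI KD :: "real^'m^'m"
  assumes Q: "sym_pos_def Q"
    and J0: "skew J0" and J: "\<And>i. skew (J i)"
    and R: "sym_pos_semidef R"
    and delta: "\<delta> > 0"
    and eq: "pc_f Q J0 R G0 E xs + pc_g Q J G E xs *v us = 0"
    and KP: "sym_pos_def KP" and KI: "sym_pos_def KI" and KD: "sym_pos_semidef KD"
  defines "gs \<equiv> pc_g Q J G E xs"
    and "sol \<equiv> (\<lambda>(x :: nat \<Rightarrow> real^'n) (\<xi> :: nat \<Rightarrow> real^'m) (u :: nat \<Rightarrow> real^'m).
             \<forall>k. let z = (1/2) *\<^sub>R (x (Suc k) + x k); yt = (transpose (pc_g Q J G E xs) ** Q) *v (z - xs) in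
               x (Suc k) = x k + \<delta> *\<^sub>R pc_f Q J0 R G0 E z + \<delta> *\<^sub>R (pc_g Q J G E z *v u k)
             \<and> \<xi> (Suc k) = \<xi> k + \<delta> *\<^sub>R yt
             \<and> u k = - (KP *v yt) - (1/2) *\<^sub>R (KI *v (\<xi> (Suc k) + \<xi> k))
                     - (1/\<delta>) *\<^sub>R (KD *v ((transpose (pc_g Q J G E xs) ** Q) *v (x (Suc k) - x k))))"
    and "V \<equiv> (\<lambda>(x :: real^'n) (\<xi> :: real^'m). (1/\<delta>) *
             ((1/2) * ((x - xs) \<bullet> (Q *v (x - xs)))
            + (1/2) * ((\<xi> - (- (matrix_inv KI *v us))) \<bullet> (KI *v (\<xi> - (- (matrix_inv KI *v us)))))
            + (1/2) * ((x - xs) \<bullet> ((transpose (transpose (pc_g Q J G E xs) ** Q) ** KD ** (transpose (pc_g Q J G E xs) ** Q)) *v (x - xs)))))"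
  shows
    \<comment> \<open>(i): (x*, xi*) is an equilibrium, Lyapunov stable, all solutions bounded, and the
        dissipation identity for V\<close>
    "(sol (\<lambda>_. xs) (\<lambda>_. (- (matrix_inv KI *v us))) (\<lambda>_. us))
     \<and> (\<forall>\<epsilon>>0. \<exists>\<eta>>0. \<forall>x \<xi> u. sol x \<xi> u \<and> dist (x 0, \<xi> 0) (xs, (- (matrix_inv KI *v us))) < \<eta>
                 \<longrightarrow> (\<forall>k. dist (x k, \<xi> k) (xs, (- (matrix_inv KI *v us))) < \<epsilon>))
     \<and> (\<forall>x \<xi> u. sol x \<xi> u \<longrightarrow> (\<exists>B. \<forall>k. norm (x k, \<xi> k) \<le> B))
     \<and> (\<forall>x \<xi> u. sol x \<xi> u \<longrightarrow> (\<forall>k.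
            V (x (Suc k)) (\<xi> (Suc k)) - V (x k) (\<xi> k)
              = - (((1/2) *\<^sub>R (x (Suc k) + x k) - xs) \<bullet>
                   ((Q ** (R + gs ** KP ** transpose gs) ** Q) *v ((1/2) *\<^sub>R (x (Suc k) + x k) - xs)))
          \<and> V (x (Suc k)) (\<xi> (Suc k)) - V (x k) (\<xi> k) \<le> 0))
     \<and> ((\<exists>\<alpha>>0. sym_pos_def (R + gs ** KP ** transpose gs - \<alpha> *\<^sub>R mat 1)) \<longrightarrow>
         (\<forall>x \<xi> u. sol x \<xi> u \<longrightarrow>
            ((\<lambda>k. (1/2) *\<^sub>R (x (Suc k) + x k)) \<longlonglongrightarrow> xs)
          \<and> ((\<lambda>k. (transpose gs ** Q) *v ((1/2) *\<^sub>R (x (Suc k) + x k))) \<longlonglongrightarrow> (transpose gs ** Q) *v xs)))"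
  proof -
  have Qs: "transpose Q = Q" using Q unfolding sym_pos_def_def by simp
  have KIs: "transpose KI = KI" using KI unfolding sym_pos_def_def by simp
  have KDs: "transpose KD = KD" using KD unfolding sym_pos_semidef_def by simp
  define \<xi>s where "\<xi>s = - (matrix_inv KI *v us)"
  define C where "C = transpose gs ** Q"
  have KIinv: "KI *v \<xi>s = - us" unfolding \<xi>s_def mv_neg
    by (simp add: matrix_vector_mul_assoc pd_inv[OF KI])
  have Veq: "\<And>x \<xi>. V x \<xi> = VV \<delta> Q KI KD C xs \<xi>s x \<xi>"
    unfolding V_def VV_def \<xi>s_def C_def gs_def by simp
  have gsE: "gs = pc_g Q J G E xs" unfolding gs_def by simp
  define M where "M = R + gs ** KP ** transpose gs"
  have qnn: "\<And>zt. 0 \<le> zt \<bullet> ((Q ** M ** Q) *v zt)"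
    unfolding quadform_split[OF Qs] M_def quad_M_split
    using psd_nonneg[OF R] pd_nonneg[OF KP] by (simp add: add_nonneg_nonneg)
  have diss: "VV \<delta> Q KI KD C xs \<xi>s (x (Suc k)) (\<xi> (Suc k)) - VV \<delta> Q KI KD C xs \<xi>s (x k) (\<xi> k)
      = - (((1/2) *\<^sub>R (x (Suc k) + x k) - xs) \<bullet> ((Q ** M ** Q) *v ((1/2) *\<^sub>R (x (Suc k) + x k) - xs)))"
    if "sol x \<xi> u" for x \<xi> u k
  proof -
    have H: "let z = (1/2) *\<^sub>R (x (Suc k) + x k); yt = C *v (z - xs) in
               x (Suc k) = x k + \<delta> *\<^sub>R pc_f Q J0 R G0 E z + \<delta> *\<^sub>R (pc_g Q J G E z *v u k)
             \<and> \<xi> (Suc k) = \<xi> k + \<delta> *\<^sub>R yt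
             \<and> u k = - (KP *v yt) - (1/2) *\<^sub>R (KI *v (\<xi> (Suc k) + \<xi> k))
                     - (1/\<delta>) *\<^sub>R (KD *v (C *v (x (Suc k) - x k)))"
      using that unfolding sol_def C_def gs_def by blast
    have H1: "x (Suc k) = x k + \<delta> *\<^sub>R pc_f Q J0 R G0 E ((1/2) *\<^sub>R (x (Suc k) + x k)) + \<delta> *\<^sub>R (pc_g Q J G E ((1/2) *\<^sub>R (x (Suc k) + x k)) *v u k)"
      "\<xi> (Suc k) = \<xi> k + \<delta> *\<^sub>R (C *v ((1/2) *\<^sub>R (x (Suc k) + x k) - xs))"
      "u k = - (KP *v (C *v ((1/2) *\<^sub>R (x (Suc k) + x k) - xs))) - (1/2) *\<^sub>R (KI *v (\<xi> (Suc k) + \<xi> k))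
                     - (1/\<delta>) *\<^sub>R (KD *v (C *v (x (Suc k) - x k)))"
      using H unfolding Let_def by blast+
    show ?thesis unfolding M_def
      by (rule step[OF Qs J0 J KIs KDs delta eq KIinv gsE C_def refl refl H1])
  qed
  have Vdec: "VV \<delta> Q KI KD C xs \<xi>s (x (Suc k)) (\<xi> (Suc k)) \<le> VV \<delta> Q KI KD C xs \<xi>s (x k) (\<xi> k)"
    if "sol x \<xi> u" for x \<xi> u k
    using diss[OF that, of k] qnn[of "(1/2) *\<^sub>R (x (Suc k) + x k) - xs"] by linarith
  have Vmono: "VV \<delta> Q KI KD C xs \<xi>s (x k) (\<xi> k) \<le> VV \<delta> Q KI KD C xs \<xi>s (x 0) (\<xi> 0)"
    if "sol x \<xi> u" for x \<xi> u k
  proof (induction k)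
    case (Suc k) then show ?case using Vdec[OF that, of k] by linarith
  qed simp
  obtain cL KU where cL: "cL > 0" and KU: "KU \<ge> 0"
    and VB: "\<And>x \<xi>. cL * ((norm (x - xs))^2 + (norm (\<xi> - \<xi>s))^2) \<le> VV \<delta> Q KI KD C xs \<xi>s x \<xi>"
            "\<And>x \<xi>. VV \<delta> Q KI KD C xs \<xi>s x \<xi> \<le> KU * ((norm (x - xs))^2 + (norm (\<xi> - \<xi>s))^2)"
    using VV_bounds[OF Q KI KD delta, of xs \<xi>s C] by blast
  have P1: "sol (\<lambda>_. xs) (\<lambda>_. \<xi>s) (\<lambda>_. us)"
  proof -
    have a: "\<delta> *\<^sub>R pc_f Q J0 R G0 E xs + \<delta> *\<^sub>R (pc_g Q J G E xs *v us) = 0"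
      using eq by (simp add: scaleR_add_right[symmetric])
    have b: "(1/2) *\<^sub>R (KI *v (\<xi>s + \<xi>s)) = - us"
      by (simp only: matrix_vector_right_distrib half_double KIinv)
    have c1: "xs = xs + \<delta> *\<^sub>R pc_f Q J0 R G0 E xs + \<delta> *\<^sub>R (pc_g Q J G E xs *v us)"
      using a by (simp add: add.assoc)
    have c2: "\<xi>s = \<xi>s + \<delta> *\<^sub>R (D *v (xs - xs))" for D :: "real^'n^'m" by simp
    have c3: "us = - (KP *v (D *v (xs - xs))) - (1/2) *\<^sub>R (KI *v (\<xi>s + \<xi>s)) - (1/\<delta>) *\<^sub>R (KD *v (D *v (xs - xs)))"
      for D :: "real^'n^'m" using b by simp
    show ?thesis unfolding sol_def Let_def half_double by (intro allI conjI c1 c2 c3)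
  qed
  have P2: "\<forall>\<epsilon>>0. \<exists>\<eta>>0. \<forall>x \<xi> u. sol x \<xi> u \<and> dist (x 0, \<xi> 0) (xs, \<xi>s) < \<eta>
                 \<longrightarrow> (\<forall>k. dist (x k, \<xi> k) (xs, \<xi>s) < \<epsilon>)"
  proof (intro allI impI)
    fix \<epsilon> :: real assume e: "\<epsilon> > 0"
    define \<eta> where "\<eta> = \<epsilon> * sqrt (cL / (KU + cL))"
    have eta: "\<eta> > 0" unfolding \<eta>_def using e cL KU by simp
    have eta2: "\<eta>^2 = \<epsilon>^2 * (cL / (KU + cL))" unfolding \<eta>_def using cL KU
      by (simp add: power_mult_distrib)
    have key: "KU * \<eta>^2 < cL * \<epsilon>^2"
    proof -
      have "KU * \<eta>^2 = (cL * \<epsilon>^2) * (KU / (KU + cL))" unfolding eta2 by (simp add: field_simps)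
      also have "\<dots> < (cL * \<epsilon>^2) * 1"
        using cL KU e by (intro mult_strict_left_mono) auto
      finally show ?thesis by simp
    qed
    show "\<exists>\<eta>>0. \<forall>x \<xi> u. sol x \<xi> u \<and> dist (x 0, \<xi> 0) (xs, \<xi>s) < \<eta>
                 \<longrightarrow> (\<forall>k. dist (x k, \<xi> k) (xs, \<xi>s) < \<epsilon>)"
    proof (intro exI[of _ \<eta>] conjI eta allI impI)
      fix x \<xi> u k assume A: "sol x \<xi> u \<and> dist (x 0, \<xi> 0) (xs, \<xi>s) < \<eta>"
      define P0 where "P0 = (norm (x 0 - xs))^2 + (norm (\<xi> 0 - \<xi>s))^2"
      define Pk where "Pk = (norm (x k - xs))^2 + (norm (\<xi> k - \<xi>s))^2"
      have P0n: "P0 \<ge> 0" "Pk \<ge> 0" unfolding P0_def Pk_def by auto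
      have "sqrt P0 < \<eta>" using A unfolding P0_def dist_pair_sq by simp
      then have "(sqrt P0)^2 < \<eta>^2" using P0n by (intro power_strict_mono) auto
      then have "P0 < \<eta>^2" using P0n by simp
      then have "KU * P0 \<le> KU * \<eta>^2" using KU by (intro mult_left_mono) auto
      moreover have "cL * Pk \<le> KU * P0"
        using VB(1)[of "x k" "\<xi> k"] VB(2)[of "x 0" "\<xi> 0"] Vmono[of x \<xi> u k] A
        unfolding P0_def Pk_def by linarith
      ultimately have "cL * Pk < cL * \<epsilon>^2" using key by linarith
      then have "Pk < \<epsilon>^2" using cL by simp
      then have "sqrt Pk < sqrt (\<epsilon>^2)" by (rule real_sqrt_less_mono)
      then show "dist (x k, \<xi> k) (xs, \<xi>s) < \<epsilon>" unfolding dist_pair_sq Pk_def[symmetric] using e by simp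
    qed
  qed
  have P3: "\<forall>x \<xi> u. sol x \<xi> u \<longrightarrow> (\<exists>B. \<forall>k. norm (x k, \<xi> k) \<le> B)"
  proof (intro allI impI)
    fix x \<xi> u assume S: "sol x \<xi> u"
    let ?V0 = "VV \<delta> Q KI KD C xs \<xi>s (x 0) (\<xi> 0)"
    show "\<exists>B. \<forall>k. norm (x k, \<xi> k) \<le> B"
    proof (intro exI[of _ "norm (xs, \<xi>s) + sqrt (?V0 / cL)"] allI)
      fix k
      define Pk where "Pk = (norm (x k - xs))^2 + (norm (\<xi> k - \<xi>s))^2"
      have "cL * Pk \<le> ?V0" using VB(1)[of "x k" "\<xi> k"] Vmono[OF S, of k] unfolding Pk_def by linarith
      then have "Pk \<le> ?V0 / cL" using cL by (simp add: field_simps)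
      then have d: "sqrt Pk \<le> sqrt (?V0 / cL)" by (rule real_sqrt_le_mono)
      have "norm (x k, \<xi> k) \<le> norm (xs, \<xi>s) + norm ((x k, \<xi> k) - (xs, \<xi>s))" by (rule norm_triangle_sub)
      also have "norm ((x k, \<xi> k) - (xs, \<xi>s)) = sqrt Pk"
        using dist_pair_sq[of "x k" "\<xi> k" xs \<xi>s] unfolding Pk_def dist_norm by simp
      finally show "norm (x k, \<xi> k) \<le> norm (xs, \<xi>s) + sqrt (?V0 / cL)" using d by linarith
    qed
  qed
  have P4: "\<forall>x \<xi> u. sol x \<xi> u \<longrightarrow> (\<forall>k.
            V (x (Suc k)) (\<xi> (Suc k)) - V (x k) (\<xi> k)
              = - (((1/2) *\<^sub>R (x (Suc k) + x k) - xs) \<bullet>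
                   ((Q ** (R + gs ** KP ** transpose gs) ** Q) *v ((1/2) *\<^sub>R (x (Suc k) + x k) - xs)))
          \<and> V (x (Suc k)) (\<xi> (Suc k)) - V (x k) (\<xi> k) \<le> 0)"
  proof (intro allI impI)
    fix x \<xi> u k assume S: "sol x \<xi> u"
    show "V (x (Suc k)) (\<xi> (Suc k)) - V (x k) (\<xi> k)
              = - (((1/2) *\<^sub>R (x (Suc k) + x k) - xs) \<bullet>
                   ((Q ** (R + gs ** KP ** transpose gs) ** Q) *v ((1/2) *\<^sub>R (x (Suc k) + x k) - xs)))
          \<and> V (x (Suc k)) (\<xi> (Suc k)) - V (x k) (\<xi> k) \<le> 0"
      unfolding Veq
    proof (intro conjI)
      show "VV \<delta> Q KI KD C xs \<xi>s (x (Suc k)) (\<xi> (Suc k)) - VV \<delta> Q KI KD C xs \<xi>s (x k) (\<xi> k)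
              = - (((1/2) *\<^sub>R (x (Suc k) + x k) - xs) \<bullet>
                   ((Q ** (R + gs ** KP ** transpose gs) ** Q) *v ((1/2) *\<^sub>R (x (Suc k) + x k) - xs)))"
        using diss[OF S, of k] unfolding M_def .
      show "VV \<delta> Q KI KD C xs \<xi>s (x (Suc k)) (\<xi> (Suc k)) - VV \<delta> Q KI KD C xs \<xi>s (x k) (\<xi> k) \<le> 0"
        using Vdec[OF S, of k] by linarith
    qed
  qed
  have P5: "(\<exists>\<alpha>>0. sym_pos_def (R + gs ** KP ** transpose gs - \<alpha> *\<^sub>R mat 1)) \<longrightarrow>
         (\<forall>x \<xi> u. sol x \<xi> u \<longrightarrow>
            ((\<lambda>k. (1/2) *\<^sub>R (x (Suc k) + x k)) \<longlonglongrightarrow> xs)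
          \<and> ((\<lambda>k. (transpose gs ** Q) *v ((1/2) *\<^sub>R (x (Suc k) + x k))) \<longlonglongrightarrow> (transpose gs ** Q) *v xs))"
  proof (intro impI allI)
    assume "\<exists>\<alpha>>0. sym_pos_def (R + gs ** KP ** transpose gs - \<alpha> *\<^sub>R mat 1)"
    then obtain \<alpha> where al: "\<alpha> > 0" and pdM: "sym_pos_def (M - \<alpha> *\<^sub>R mat 1)" unfolding M_def by blast
    have Ma: "\<alpha> * (norm w)^2 \<le> w \<bullet> (M *v w)" for w
    proof -
      have "0 \<le> w \<bullet> ((M - \<alpha> *\<^sub>R mat 1) *v w)" by (rule pd_nonneg[OF pdM])
      also have "\<dots> = w \<bullet> (M *v w) - \<alpha> * (norm w)^2"
        by (simp add: matrix_vector_mult_diff_rdistrib mv_scaled_id inner_diff_right power2_norm_eq_inner)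
      finally show ?thesis by simp
    qed
    obtain cQ where cQ: "cQ > 0" "\<And>v. cQ * (norm v)^2 \<le> v \<bullet> (Q *v v)" using pd_coercive[OF Q] by blast
    have Qlow: "cQ * norm v \<le> norm (Q *v v)" for v
    proof (cases "v = 0")
      case False
      have "cQ * (norm v)^2 \<le> norm v * norm (Q *v v)"
        using cQ(2)[of v] Cauchy_Schwarz_ineq2[of v "Q *v v"] by linarith
      then show ?thesis using False by (simp add: power2_eq_square)
    qed simp
    fix x \<xi> u assume S: "sol x \<xi> u"
    define Vk where "Vk k = VV \<delta> Q KI KD C xs \<xi>s (x k) (\<xi> k)" for k
    define zt where "zt k = (1/2) *\<^sub>R (x (Suc k) + x k) - xs" for k
    have zb: "(norm (zt k))^2 \<le> (Vk k - Vk (Suc k)) / (\<alpha> * cQ^2)" for k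
    proof -
      have "Vk k - Vk (Suc k) = (Q *v zt k) \<bullet> (M *v (Q *v zt k))"
        using diss[OF S, of k] unfolding Vk_def zt_def quadform_split[OF Qs] by simp
      moreover have "\<alpha> * (norm (Q *v zt k))^2 \<le> (Q *v zt k) \<bullet> (M *v (Q *v zt k))" by (rule Ma)
      moreover have "(cQ * norm (zt k))^2 \<le> (norm (Q *v zt k))^2"
        using Qlow[of "zt k"] cQ by (intro power_mono) auto
      ultimately have "\<alpha> * (cQ^2 * (norm (zt k))^2) \<le> Vk k - Vk (Suc k)"
        using al by (smt (verit) mult_left_mono power_mult_distrib)
      then show ?thesis using al cQ by (simp add: field_simps)
    qed
    have Vnn: "0 \<le> Vk k" for k
      using VB(1)[of "x k" "\<xi> k"] cL unfolding Vk_def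
      by (smt (verit) mult_nonneg_nonneg zero_le_power2 add_nonneg_nonneg)
    have Vd: "Vk (Suc k) \<le> Vk k" for k unfolding Vk_def by (rule Vdec[OF S])
    have V0: "Vk k \<le> Vk 0" for k unfolding Vk_def by (rule Vmono[OF S])
    have "convergent Vk"
    proof (rule Bseq_monoseq_convergent)
      show "Bseq Vk" by (rule BseqI'[of _ "Vk 0"]) (use Vnn V0 in simp)
      show "monoseq Vk" unfolding monoseq_iff using decseq_SucI[of Vk, OF Vd] by blast
    qed
    then obtain L where L: "Vk \<longlonglongrightarrow> L" by (auto simp: convergent_def)
    have "(\<lambda>k. Vk k - Vk (Suc k)) \<longlonglongrightarrow> L - L" by (intro tendsto_diff L LIMSEQ_Suc)
    then have "(\<lambda>k. Vk k - Vk (Suc k)) \<longlonglongrightarrow> 0" by simp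
    then have "(\<lambda>k. (Vk k - Vk (Suc k)) / (\<alpha> * cQ^2)) \<longlonglongrightarrow> 0"
      by (rule tendsto_divide_zero)
    then have "(\<lambda>k. (norm (zt k))^2) \<longlonglongrightarrow> 0"
      by (rule tendsto_sandwich[rotated 2, OF tendsto_const]) (use zb in auto)
    then have "(\<lambda>k. sqrt ((norm (zt k))^2)) \<longlonglongrightarrow> sqrt 0" by (rule tendsto_real_sqrt)
    then have "(\<lambda>k. norm (zt k)) \<longlonglongrightarrow> 0" by simp
    then have "zt \<longlonglongrightarrow> 0" by (simp add: tendsto_norm_zero_iff)
    then have Z: "(\<lambda>k. (1/2) *\<^sub>R (x (Suc k) + x k)) \<longlonglongrightarrow> xs"
      unfolding zt_def by (simp add: LIM_zero_iff)
    show "((\<lambda>k. (1/2) *\<^sub>R (x (Suc k) + x k)) \<longlonglongrightarrow> xs)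
          \<and> ((\<lambda>k. (transpose gs ** Q) *v ((1/2) *\<^sub>R (x (Suc k) + x k))) \<longlonglongrightarrow> (transpose gs ** Q) *v xs)"
      using Z bounded_linear.tendsto[OF matrix_vector_mul_bounded_linear Z] by blast
  qed
  show ?thesis using P1 P2 P3 P4 P5 unfolding \<xi>s_def by blast
qed

end
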